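(* Let $F$ be an infinite field. The pairwise distinct commutators $[z_1,a_1y_1,\dots,a_ny_n,z_2,b_1y_1,\dots,b_ny_n]$, where $z_1,z_2$ are distinct variables of degree $1$, $y_1,\dots,y_n$ are distinct variables of degree $0$, $n\ge0$ and $a_i,b_i\ge0$, are linearly independent modulo the $T_{\mathbb{Z}_3}$-ideal $I$ of $\mathbb{Z}_3$-graded identities of $UT_3(F)^{(-)}$.
   Context: $UT_3(F)^{(-)}$: $3\times3$ upper triangular matrices with bracket $[a,b]=ab-ba$ and canonical $\mathbb{Z}_3$-grading (degree-$k$ component spanned by $e_{ij}$ with $j-i=k$). The free Lie algebra is generated by variables of degree $0$ ($y_i$), $1$ ($z_i$), $2$ ($w_i$). Commutators are left normed; $[z_1,a_1y_1,\dots,a_ny_n,z_2,b_1y_1,\dots,b_ny_n]$ denotes $z_1$ followed by $y_i$ repeated $a_i$ times ($i=1,\dots,n$), then $z_2$, then $y_i$ repeated $b_i$ times. *)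

theory Defs
  imports "Jordan_Normal_Form.Matrix"
begin

text \<open>UT_3(F) is realised as 3x3 matrices over F; the canonical Z_3-grading:
  the degree-k component (k = 0,1,2) consists of the 3x3 matrices supported on
  entries e_ij with j - i = k (i, j indexed 0,1,2).\<close>
definition UT3_comp :: "nat \<Rightarrow> 'a::field mat set" where
  "UT3_comp k = {A. A \<in> carrier_mat 3 3 \<and>
      (\<forall>i<3. \<forall>j<3. A $$ (i,j) \<noteq> 0 \<longrightarrow> j = i + k)}"

definition lie_br :: "'a::field mat \<Rightarrow> 'a mat \<Rightarrow> 'a mat" where
  "lie_br A B = A * B - B * A"

fun lnc :: "'a::field mat \<Rightarrow> 'a mat list \<Rightarrow> 'a mat" where
  "lnc x [] = x"
| "lnc x (u # us) = lnc (lie_br x u) us"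

definition ypart :: "nat list \<Rightarrow> (nat \<Rightarrow> 'a::field mat) \<Rightarrow> 'a mat list" where
  "ypart a Y = concat (map (\<lambda>i. replicate (a ! i) (Y i)) [0..<length a])"

definition comm_eval :: "nat list \<Rightarrow> nat list \<Rightarrow> (nat \<Rightarrow> 'a::field mat)
    \<Rightarrow> 'a mat \<Rightarrow> 'a mat \<Rightarrow> 'a mat" where
  "comm_eval a b Y Z1 Z2 = lnc Z1 (ypart a Y @ [Z2] @ ypart b Y)"

end

theory Submission
  imports Defs "HOL-Computational_Algebra.Polynomial"
begin

lemma univ_zero:
  fixes k :: "nat \<Rightarrow> 'a::field"
  assumes inf: "infinite (UNIV :: 'a set)" and fin: "finite D"
    and z: "\<forall>s. (\<Sum>d\<in>D. k d * s ^ d) = 0"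
  shows "\<forall>d\<in>D. k d = 0"
proof -
  define p where "p = (\<Sum>d\<in>D. monom (k d) d)"
  have "poly p s = 0" for s using z by (simp add: p_def poly_sum poly_monom)
  hence "p = 0" using inf poly_roots_finite[of p] by auto
  show ?thesis
  proof
    fix d assume d: "d \<in> D"
    have "coeff p d = k d"
      using d fin by (simp add: p_def coeff_sum coeff_monom)
    thus "k d = 0" using \<open>p = 0\<close> by simp
  qed
qed

definition mono :: "nat list \<Rightarrow> (nat \<Rightarrow> 'a::field) \<Rightarrow> 'a" where
  "mono e x = (\<Prod>i<length e. x i ^ (e ! i))"

lemma mono_cons: "mono (d # t) (case_nat s x) = s ^ d * mono t x"
  unfolding mono_def by (simp only: length_Cons prod.lessThan_Suc_shift) simp

lemma multi_zero:
  fixes c :: "nat list \<Rightarrow> 'a::field"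
  assumes inf: "infinite (UNIV :: 'a set)"
  shows "finite S \<Longrightarrow> \<forall>e\<in>S. length e = m \<Longrightarrow> \<forall>x. (\<Sum>e\<in>S. c e * mono e x) = 0
         \<Longrightarrow> \<forall>e\<in>S. c e = 0"
proof (induction m arbitrary: S c)
  case 0
  hence "S \<subseteq> {[]}" by auto
  thus ?case using 0 by (cases "S = {}") (auto simp: mono_def subset_singleton_iff)
next
  case (Suc m)
  define D where "D = hd ` S"
  have finD: "finite D" using Suc.prems by (simp add: D_def)
  define k where "k t d = (\<Sum>e\<in>{e\<in>S. hd e = d}. c e * mono (tl e) t)" for t d
  have ek: "e = hd e # tl e" if "e \<in> S" for e
    using Suc.prems(2) that by (cases e) auto
  have kz: "\<forall>d\<in>D. k t d = 0" for t
  proof (rule univ_zero[OF inf finD], rule allI)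
    fix s
    have "(\<Sum>d\<in>D. k t d * s ^ d) = (\<Sum>d\<in>D. (\<Sum>e\<in>{e\<in>S. hd e = d}. c e * mono e (case_nat s t)))"
    proof (rule sum.cong[OF refl])
      fix d assume "d \<in> D"
      have "(\<Sum>e\<in>{e\<in>S. hd e = d}. c e * mono e (case_nat s t))
          = (\<Sum>e\<in>{e\<in>S. hd e = d}. c e * mono (tl e) t * s ^ d)"
      proof (rule sum.cong[OF refl])
        fix e assume "e \<in> {e\<in>S. hd e = d}"
        hence "mono e (case_nat s t) = s ^ d * mono (tl e) t"
          using ek mono_cons by (metis (mono_tags, lifting) mem_Collect_eq)
        thus "c e * mono e (case_nat s t) = c e * mono (tl e) t * s ^ d" by simp
      qed
      thus "k t d * s ^ d = (\<Sum>e\<in>{e\<in>S. hd e = d}. c e * mono e (case_nat s t))"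
        by (simp add: k_def sum_distrib_right)
    qed
    also have "\<dots> = (\<Sum>e\<in>S. c e * mono e (case_nat s t))"
      by (rule sum.group) (use Suc.prems finD in \<open>auto simp: D_def\<close>)
    also have "\<dots> = 0" using Suc.prems by blast
    finally show "(\<Sum>d\<in>D. k t d * s ^ d) = 0" .
  qed
  show ?case
  proof
    fix e assume eS: "e \<in> S"
    define d where "d = hd e"
    define T where "T = tl ` {e\<in>S. hd e = d}"
    have inj: "inj_on tl {e\<in>S. hd e = d}"
      by (rule inj_onI) (metis (mono_tags, lifting) ek mem_Collect_eq)
    have "\<forall>u\<in>T. c (d # u) = 0"
    proof (rule Suc.IH)
      show "finite T" using Suc.prems by (simp add: T_def)
      show "\<forall>u\<in>T. length u = m" using Suc.prems by (auto simp: T_def)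
      show "\<forall>x. (\<Sum>u\<in>T. c (d # u) * mono u x) = 0"
      proof
        fix x
        have "(\<Sum>u\<in>T. c (d # u) * mono u x) = (\<Sum>e\<in>{e\<in>S. hd e = d}. c (d # tl e) * mono (tl e) x)"
          unfolding T_def by (rule sum.reindex[OF inj, unfolded comp_def])
        also have "\<dots> = k x d" unfolding k_def
          by (rule sum.cong[OF refl]) (metis (mono_tags, lifting) ek mem_Collect_eq)
        also have "\<dots> = 0" using kz eS by (auto simp: D_def d_def)
        finally show "(\<Sum>u\<in>T. c (d # u) * mono u x) = 0" .
      qed
    qed
    moreover have "tl e \<in> T" using eS by (auto simp: T_def d_def)
    ultimately show "c e = 0" using ek[OF eS] by (metis d_def)
  qed
qed


definition sh :: "'a::field \<Rightarrow> 'a \<Rightarrow> 'a \<Rightarrow> 'a mat" where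
  "sh p q r = mat 3 3 (\<lambda>(i,j). if i = 0 \<and> j = 1 then p else if i = 1 \<and> j = 2 then q
      else if i = 0 \<and> j = 2 then r else 0)"

definition dg :: "'a::field \<Rightarrow> 'a \<Rightarrow> 'a mat" where
  "dg u v = mat 3 3 (\<lambda>(i,j). if i = j \<and> i = 1 then u else if i = j \<and> i = 2 then v else 0)"

lemma three: "{0..<3::nat} = {0,1,2}" by auto

lemma br_sh_dg: "lie_br (sh p q r) (dg u v) = sh (p*u) (q*(v-u)) (r*v)"
  unfolding lie_br_def
  by (rule eq_matI) (auto simp: sh_def dg_def scalar_prod_def three less_Suc_eq numeral_eq_Suc algebra_simps)

lemma br_sh_sh: "lie_br (sh p q r) (sh p' q' r') = sh 0 0 (p*q' - p'*q)"
  unfolding lie_br_def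
  by (rule eq_matI) (auto simp: sh_def scalar_prod_def three less_Suc_eq numeral_eq_Suc algebra_simps)

lemma lnc_app: "lnc x (xs @ ys) = lnc (lnc x xs) ys"
  by (induction xs arbitrary: x) auto

lemma lnc_dg: "lnc (sh p q r) (map (\<lambda>(u,v). dg u v) L) =
   sh (p * prod_list (map fst L)) (q * prod_list (map (\<lambda>(u,v). v - u) L)) (r * prod_list (map snd L))"
  by (induction L arbitrary: p q r) (auto simp: br_sh_dg algebra_simps)

lemma ypart_dg: "ypart a (\<lambda>i. dg (f i) (g i)) =
   map (\<lambda>(u,v). dg u v) (concat (map (\<lambda>i. replicate (a ! i) (f i, g i)) [0..<length a]))"
  by (simp add: ypart_def map_concat comp_def)

lemma prod_list_concat': "prod_list (concat xss) = prod_list (map prod_list (xss :: 'b::comm_monoid_mult list list))"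
  by (induction xss) auto

lemma prod_conc: "prod_list (map h (concat (map (\<lambda>i. replicate (a ! i) (f i, g i)) [0..<length a])))
   = (\<Prod>i<length a. h (f i, g i) ^ (a ! i))"
  proof -
  have "prod_list (map h (concat (map (\<lambda>i. replicate (a ! i) (f i, g i)) [0..<length a])))
     = prod_list (map (\<lambda>i. h (f i, g i) ^ (a ! i)) [0..<length a])"
    by (simp add: map_concat prod_list_concat' comp_def)
  also have "\<dots> = (\<Prod>i\<in>set [0..<length a]. h (f i, g i) ^ (a ! i))"
    by (rule prod.distinct_set_conv_list[symmetric]) simp
  finally show ?thesis by (simp add: atLeast0LessThan)
qed


lemma dg_comp: "dg u v \<in> UT3_comp 0"
  by (auto simp: UT3_comp_def dg_def split: if_splits)

lemma sh_comp: "sh p q 0 \<in> UT3_comp 1"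
  by (auto simp: UT3_comp_def sh_def split: if_splits)

lemma eval_entry:
  assumes "length a = n" "length b = n"
  shows "comm_eval a b (\<lambda>i. dg (x i) (x (n+i))) (sh 1 0 0) (sh 0 1 0) $$ (0,2) = mono (a @ b) x"
proof -
  let ?f = "\<lambda>i. x i" and ?g = "\<lambda>i. x (n+i)"
  have "comm_eval a b (\<lambda>i. dg (x i) (x (n+i))) (sh 1 0 0) (sh 0 1 0)
     = sh 0 0 ((\<Prod>i<length a. x i ^ (a ! i)) * (\<Prod>i<length b. x (n+i) ^ (b ! i)))"
    unfolding comm_eval_def lnc_app
    using ypart_dg[of a ?f ?g] ypart_dg[of b ?f ?g]
    by (simp add: lnc_dg br_sh_sh prod_conc[where h=fst] prod_conc[where h=snd])
  moreover have "mono (a @ b) x = (\<Prod>i<length a. x i ^ (a ! i)) * (\<Prod>i<length b. x (n+i) ^ (b ! i))"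
  proof -
    have "mono (a @ b) x = (\<Prod>i\<in>{..<n} \<union> {n..<n+n}. x i ^ ((a@b) ! i))"
      proof -
        have "{..<length (a@b)} = {..<n} \<union> {n..<n+n}" using assms by auto
        thus ?thesis unfolding mono_def by simp
      qed
    also have "\<dots> = (\<Prod>i<n. x i ^ ((a@b) ! i)) * (\<Prod>i\<in>{n..<n+n}. x i ^ ((a@b) ! i))"
      by (rule prod.union_disjoint) auto
    also have "(\<Prod>i<n. x i ^ ((a@b) ! i)) = (\<Prod>i<n. x i ^ (a ! i))"
      using assms by (intro prod.cong) (auto simp: nth_append)
    also have "(\<Prod>i\<in>{n..<n+n}. x i ^ ((a@b) ! i)) = (\<Prod>i<n. x (n+i) ^ (b ! i))"
    proof -
      have "(\<Prod>i\<in>{n..<n+n}. x i ^ ((a@b) ! i)) = (\<Prod>i\<in>(\<lambda>i. n+i) ` {..<n}. x i ^ ((a@b) ! i))"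
        using image_add_atLeastLessThan[of n 0 n] by (simp add: lessThan_atLeast0 add.commute)
      also have "\<dots> = (\<Prod>i<n. x (n+i) ^ ((a@b) ! (n+i)))"
        by (subst prod.reindex) (auto simp: inj_on_def)
      finally show ?thesis using assms by (simp add: nth_append)
    qed
    finally show ?thesis using assms by simp
  qed
  ultimately show ?thesis by (simp add: sh_def)
qed

theorem mainTheorem9:
  fixes c :: "nat list \<times> nat list \<Rightarrow> 'a::field"
    and S :: "(nat list \<times> nat list) set"
    and n :: nat
  assumes "infinite (UNIV :: 'a set)"
    and "finite S"
    and "\<forall>(a, b) \<in> S. length a = n \<and> length b = n"
    and "\<forall>Y Z1 Z2. (\<forall>i. Y i \<in> UT3_comp 0) \<longrightarrow> Z1 \<in> UT3_comp 1 \<longrightarrow> Z2 \<in> UT3_comp 1 \<longrightarrow>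
           (\<forall>i<3. \<forall>j<3. (\<Sum>k\<in>S. c k * comm_eval (fst k) (snd k) Y Z1 Z2 $$ (i, j)) = 0)"
  shows "\<forall>k\<in>S. c k = 0"
proof -
  define app where "app = (\<lambda>k :: nat list \<times> nat list. fst k @ snd k)"
  define SS where "SS = app ` S"
  define cc where "cc e = c (take n e, drop n e)" for e
  have hback: "(take n (app k), drop n (app k)) = k" if "k \<in> S" for k
    using assms(3) that by (cases k) (auto simp: app_def)
  have inj: "inj_on app S"
    by (rule inj_onI) (metis hback)
  have "\<forall>e\<in>SS. cc e = 0"
  proof (rule multi_zero[OF assms(1)])
    show "finite SS" using assms(2) by (simp add: SS_def)
    show "\<forall>e\<in>SS. length e = n + n" using assms(3) by (auto simp: SS_def app_def)
    show "\<forall>x. (\<Sum>e\<in>SS. cc e * mono e x) = 0"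
    proof
      fix x :: "nat \<Rightarrow> 'a"
      have "(\<Sum>e\<in>SS. cc e * mono e x) = (\<Sum>k\<in>S. cc (app k) * mono (app k) x)"
        unfolding SS_def by (rule sum.reindex[OF inj, unfolded comp_def])
      also have "\<dots> = (\<Sum>k\<in>S. c k * comm_eval (fst k) (snd k) (\<lambda>i. dg (x i) (x (n+i))) (sh 1 0 0) (sh 0 1 0) $$ (0,2))"
      proof (rule sum.cong[OF refl])
        fix k assume k: "k \<in> S"
        have l: "length (fst k) = n" "length (snd k) = n" using assms(3) k by auto
        show "cc (app k) * mono (app k) x = c k * comm_eval (fst k) (snd k) (\<lambda>i. dg (x i) (x (n+i))) (sh 1 0 0) (sh 0 1 0) $$ (0,2)"
          using hback[OF k] eval_entry[OF l, of x] by (simp add: cc_def app_def)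
      qed
      also have "\<dots> = 0"
        by (rule assms(4)[rule_format]) (auto simp: dg_comp sh_comp[of 1 0, simplified] sh_comp[of 0 1, simplified])
      finally show "(\<Sum>e\<in>SS. cc e * mono e x) = 0" .
    qed
  qed
  thus ?thesis using hback by (auto simp: SS_def cc_def)
qed

end
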